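(* Let $k\in\mathbb{N}$, $G=(g_1,\dots,g_k)\in\mathbb{N}_0^k$ with $g_1>0$, $g\in\langle G\rangle$, and $m\in\mathbb{N}$ with $\gcd(g,m)=1$. Then $G$ is telescopic if and only if $\tau_{g,m}(G)$ is telescopic.
   Context: $\langle G\rangle$ is the set of $\mathbb{N}_0$-linear combinations of the entries of $G$. $G_i=(g_1,\dots,g_i)$, $d_i=\gcd(G_i)$, $c_j=d_{j-1}/d_j$; $G$ is telescopic if $c_jg_j\in\langle G_{j-1}\rangle$ for $2\le j\le k$. For $g\in\langle G\rangle$ and $m\in\mathbb{N}$ with $\gcd(m,g)=1$, $\tau_{g,m}(G)=(mg_1,\dots,mg_k,g)\in\mathbb{N}_0^{k+1}$. *)

theory Defs
  imports Main
begin

text \<open>A sequence G = (g_1,...,g_k) of natural numbers is represented as a list of length k;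
  the entry g_i is G ! (i - 1).\<close>

definition semigrp :: "nat list \<Rightarrow> nat set" where
  "semigrp G = {(\<Sum>i<length G. a i * G ! i) | a. True}"

definition dgcd :: "nat list \<Rightarrow> nat \<Rightarrow> nat" where
  "dgcd G i = Gcd (set (take i G))"

definition cfac :: "nat list \<Rightarrow> nat \<Rightarrow> nat" where
  "cfac G j = dgcd G (j - 1) div dgcd G j"

definition telescopic :: "nat list \<Rightarrow> bool" where
  "telescopic G \<longleftrightarrow>
     (\<forall>j. 2 \<le> j \<and> j \<le> length G \<longrightarrow> cfac G j * G ! (j - 1) \<in> semigrp (take (j - 1) G))"

definition tau :: "nat \<Rightarrow> nat \<Rightarrow> nat list \<Rightarrow> nat list" where
  "tau g m G = map (\<lambda>x. m * x) G @ [g]"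

end

theory Submission
  imports Defs
begin

lemma semigrp_scale:
  assumes "m > 0"
  shows "m * x \<in> semigrp (map (\<lambda>y. m * y) L) \<longleftrightarrow> x \<in> semigrp L"
proof
  assume "m * x \<in> semigrp (map (\<lambda>y. m * y) L)"
  then obtain a where "m * x = (\<Sum>i<length L. a i * (map (\<lambda>y. m * y) L ! i))"
    by (auto simp: semigrp_def)
  also have "\<dots> = m * (\<Sum>i<length L. a i * L ! i)"
    by (simp add: sum_distrib_left mult.left_commute)
  finally have "x = (\<Sum>i<length L. a i * L ! i)" using assms by simp
  then show "x \<in> semigrp L" by (auto simp: semigrp_def)
next
  assume "x \<in> semigrp L"
  then obtain a where "x = (\<Sum>i<length L. a i * L ! i)"
    by (auto simp: semigrp_def)
  then have "m * x = (\<Sum>i<length L. a i * (map (\<lambda>y. m * y) L ! i))"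
    by (simp add: sum_distrib_left mult.left_commute)
  then show "m * x \<in> semigrp (map (\<lambda>y. m * y) L)"
    by (auto simp: semigrp_def)
qed

lemma Gcd_scale: "Gcd (set (map (\<lambda>y. m * y) L)) = m * Gcd (set (L::nat list))"
proof -
  have "set (map (\<lambda>y. m * y) L) = (*) m ` set L" by auto
  then show ?thesis by (simp add: Gcd_mult)
qed

lemma dgcd_tau:
  assumes "i \<le> length G"
  shows "dgcd (tau g m G) i = m * dgcd G i"
proof -
  have "take i (tau g m G) = map (\<lambda>y. m * y) (take i G)"
    using assms by (simp add: tau_def take_map)
  then show ?thesis by (simp add: dgcd_def Gcd_mult)
qed

theorem mainTheorem12:
  fixes k :: nat and G :: "nat list" and g m :: nat
  assumes "k \<ge> 1" and "length G = k" and "G ! 0 > 0"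
    and "g \<in> semigrp G" and "m \<ge> 1" and "gcd g m = 1"
  shows "telescopic G \<longleftrightarrow> telescopic (tau g m G)"
proof -
  have mpos: "m > 0" using assms by simp
  have lt: "length (tau g m G) = k + 1" using assms by (simp add: tau_def)
  have low: "cfac (tau g m G) j * tau g m G ! (j - 1) \<in> semigrp (take (j - 1) (tau g m G))
       \<longleftrightarrow> cfac G j * G ! (j - 1) \<in> semigrp (take (j - 1) G)"
    if "2 \<le> j" "j \<le> k" for j
  proof -
    have c: "cfac (tau g m G) j = cfac G j"
      using that assms mpos by (simp add: cfac_def dgcd_tau)
    have n: "tau g m G ! (j - 1) = m * G ! (j - 1)"
      using that assms by (auto simp: tau_def nth_append)
    have t: "take (j - 1) (tau g m G) = map (\<lambda>y. m * y) (take (j - 1) G)"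
      using that assms by (simp add: tau_def take_map)
    show ?thesis unfolding c n t using semigrp_scale[OF mpos, of "cfac G j * G ! (j - 1)" "take (j - 1) G"]
      by (simp add: mult.left_commute)
  qed
  have last: "cfac (tau g m G) (k + 1) * tau g m G ! k \<in> semigrp (take k (tau g m G))"
  proof -
    define d where "d = Gcd (set G)"
    have dG: "dgcd G k = d" using assms by (simp add: dgcd_def d_def)
    have dpos: "d > 0"
    proof -
      have "G ! 0 \<in> set G" using assms by (simp)
      then have "d dvd G ! 0" by (simp add: d_def)
      then show ?thesis using assms by (auto intro: Nat.gr0I)
    qed
    have ddvd: "d dvd g"
    proof -
      obtain a where ga: "g = (\<Sum>i<length G. a i * G ! i)"
        using assms(4) by (auto simp: semigrp_def)
      have "d dvd (\<Sum>i<length G. a i * G ! i)"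
        by (rule dvd_sum) (simp add: d_def)
      then show ?thesis using ga by simp
    qed
    then obtain h where gh: "g = d * h" by blast
    have "coprime h m" using assms(6) gh
      by (metis coprime_commute coprime_iff_gcd_eq_1 coprime_mult_left_iff)
    then have "gcd (d * m) (d * h) = d"
      by (simp add: gcd_mult_left coprime_iff_gcd_eq_1 gcd.commute)
    then have gk1: "gcd (m * d) g = d" by (simp add: gh mult.commute)
    have dk1: "dgcd (tau g m G) (k + 1) = d"
      using assms gk1 by (simp add: dgcd_def tau_def Gcd_mult d_def gcd.commute)
    have dk: "dgcd (tau g m G) k = m * d" using dgcd_tau[of k G g m] assms dG by simp
    have c: "cfac (tau g m G) (k + 1) = m"
      using dk dk1 dpos by (simp add: cfac_def)
    have n: "tau g m G ! k = g" using assms by (simp add: tau_def nth_append)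
    have t: "take k (tau g m G) = map (\<lambda>y. m * y) G" using assms by (simp add: tau_def)
    show ?thesis unfolding c n t using semigrp_scale[OF mpos, of g G] assms(4) by simp
  qed
  show ?thesis
  proof
    assume T: "telescopic G"
    show "telescopic (tau g m G)"
      unfolding telescopic_def lt
    proof (intro allI impI)
      fix j assume j: "2 \<le> j \<and> j \<le> k + 1"
      show "cfac (tau g m G) j * tau g m G ! (j - 1) \<in> semigrp (take (j - 1) (tau g m G))"
      proof (cases "j = k + 1")
        case True then show ?thesis using last by simp
      next
        case False
        then have "j \<le> k" using j by simp
        then show ?thesis using low[of j] j T assms(2) by (simp add: telescopic_def)
      qed
    qed
  next
    assume T: "telescopic (tau g m G)"
    show "telescopic G"
      unfolding telescopic_def
    proof (intro allI impI)
      fix j assume j: "2 \<le> j \<and> j \<le> length G"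
      then show "cfac G j * G ! (j - 1) \<in> semigrp (take (j - 1) G)"
        using low[of j] T lt assms(2) by (simp add: telescopic_def)
    qed
  qed
qed

end
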